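(* Let $(X,\rho)$ be a complete, unbounded hyperbolic metric space and let $\omega:[0,+\infty)\to[0,+\infty)$ be a continuous, subadditive, nonzero and nondecreasing function with $\omega(0)=0$. Let $\mathcal{C}^{\mathrm{b}}_\omega(X)=\{f\in\mathcal{C}_\omega(X): \sup_{x,y\in X}\rho(f(x),f(y))<+\infty\}$ be endowed with the metric $d_\infty(f,g)=\sup_{x\in X}\rho(f(x),g(x))$. Then there is a $\sigma$-lower porous set $\mathcal{M}\subset\mathcal{C}^{\mathrm{b}}_\omega(X)$ such that for every $f\in\mathcal{C}^{\mathrm{b}}_\omega(X)\setminus\mathcal{M}$ one has $\omega_f(s)<\omega(s)$ for every $s\in(0,+\infty)$.
   Context: A metric space $(X,\rho)$ has a coherent system of geodesics $\Gamma$ if $\Gamma$ is a family of isometries $\gamma:[0,\rho(x,y)]\to X$ with $\gamma(0)=x$, $\gamma(\rho(x,y))=y$ such that: (1) for all $x,y$ there is a unique $\gamma\in\Gamma$ from $x$ to $y$; (2) if $\gamma\in\Gamma$ goes from $x$ to $y$, then $t\mapsto\gamma(\rho(x,y)-t)$ is the element of $\Gamma$ from $y$ to $x$; (3) if $\gamma\in\Gamma$ goes from $x$ to $y$ and $0\le t_1\le t_2\le\rho(x,y)$, then $t\mapsto\gamma(t+t_1)$ on $[0,t_2-t_1]$ is the element of $\Gamma$ from $\gamma(t_1)$ to $\gamma(t_2)$. Write $(1-t)x\oplus ty=\gamma(t\rho(x,y))$ with $\gamma\in\Gamma$ from $x$ to $y$. $X$ is hyperbolic if $\rho((1-t)x\oplus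 ty,(1-t)x\oplus tz)\le t\rho(y,z)$ for all $x,y,z\in X$, $t\in[0,1]$. The modulus of continuity of $f:X\to X$ is $\omega_f(s)=\sup\{\rho(f(x),f(y)):\rho(x,y)\le s\}$, and $\mathcal{C}_\omega(X)$ is the set of maps $f:X\to X$ with $\omega_f\le\omega$. In a metric space $(Y,d)$, a set $P$ is lower porous at $x\in Y$ if there are $\epsilon_0>0$, $\alpha>0$ such that for every $\epsilon\in(0,\epsilon_0]$ there is $y\in Y$ with $B(y,\alpha\epsilon)\subseteq B(x,\epsilon)\setminus P$ (open balls); $P$ is lower porous if it is lower porous at every $x\in Y$, and $\sigma$-lower porous if it is a countable union of lower porous sets. *)

theory Defs
  imports "HOL-Analysis.Analysis"
begin

text \<open>A coherent system of geodesics, represented by its (unique) selector: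
  G x y is the element of the system going from x to y, defined on [0, dist x y].\<close>
definition coherent_geodesics :: "('a::metric_space \<Rightarrow> 'a \<Rightarrow> real \<Rightarrow> 'a) \<Rightarrow> bool" where
  "coherent_geodesics G \<longleftrightarrow>
     (\<forall>x y. G x y 0 = x \<and> G x y (dist x y) = y \<and>
        (\<forall>s\<in>{0..dist x y}. \<forall>t\<in>{0..dist x y}. dist (G x y s) (G x y t) = \<bar>s - t\<bar>)) \<and>
     (\<forall>x y. \<forall>t\<in>{0..dist x y}. G y x t = G x y (dist x y - t)) \<and>
     (\<forall>x y t1 t2. 0 \<le> t1 \<longrightarrow> t1 \<le> t2 \<longrightarrow> t2 \<le> dist x y \<longrightarrow>
        (\<forall>t\<in>{0..t2 - t1}. G (G x y t1) (G x y t2) t = G x y (t + t1)))"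

text \<open>(1-t)x \<oplus> ty\<close>
definition geo_comb :: "('a::metric_space \<Rightarrow> 'a \<Rightarrow> real \<Rightarrow> 'a) \<Rightarrow> real \<Rightarrow> 'a \<Rightarrow> 'a \<Rightarrow> 'a" where
  "geo_comb G t x y = G x y (t * dist x y)"

definition hyperbolic_space :: "'a::metric_space itself \<Rightarrow> bool" where
  "hyperbolic_space _ \<longleftrightarrow> (\<exists>G :: 'a \<Rightarrow> 'a \<Rightarrow> real \<Rightarrow> 'a. coherent_geodesics G \<and>
     (\<forall>x y z. \<forall>t\<in>{0..1}. dist (geo_comb G t x y) (geo_comb G t x z) \<le> t * dist y z))"

text \<open>Modulus of continuity (extended-real valued, since the supremum may be infinite).\<close>
definition modulus :: "('a::metric_space \<Rightarrow> 'a) \<Rightarrow> real \<Rightarrow> ereal" where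
  "modulus f s = (SUP p\<in>{(x, y). dist x y \<le> s}. ereal (dist (f (fst p)) (f (snd p))))"

definition C_omega :: "(real \<Rightarrow> real) \<Rightarrow> ('a::metric_space \<Rightarrow> 'a) set" where
  "C_omega \<omega> = {f. \<forall>s\<ge>0. modulus f s \<le> ereal (\<omega> s)}"

definition C_omega_b :: "(real \<Rightarrow> real) \<Rightarrow> ('a::metric_space \<Rightarrow> 'a) set" where
  "C_omega_b \<omega> = {f \<in> C_omega \<omega>. \<exists>B. \<forall>x y. dist (f x) (f y) \<le> B}"

definition d_sup :: "('a::metric_space \<Rightarrow> 'a) \<Rightarrow> ('a \<Rightarrow> 'a) \<Rightarrow> real" where
  "d_sup f g = (SUP x. dist (f x) (g x))"

definition lower_porous_at :: "'b set \<Rightarrow> ('b \<Rightarrow> 'b \<Rightarrow> real) \<Rightarrow> 'b set \<Rightarrow> 'b \<Rightarrow> bool" where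
  "lower_porous_at Y d P x \<longleftrightarrow> (\<exists>\<epsilon>0>0. \<exists>\<alpha>>0. \<forall>\<epsilon>. 0 < \<epsilon> \<and> \<epsilon> \<le> \<epsilon>0 \<longrightarrow>
     (\<exists>y\<in>Y. {z\<in>Y. d y z < \<alpha> * \<epsilon>} \<subseteq> {z\<in>Y. d x z < \<epsilon>} - P))"

definition lower_porous :: "'b set \<Rightarrow> ('b \<Rightarrow> 'b \<Rightarrow> real) \<Rightarrow> 'b set \<Rightarrow> bool" where
  "lower_porous Y d P \<longleftrightarrow> (\<forall>x\<in>Y. lower_porous_at Y d P x)"

definition sigma_lower_porous :: "'b set \<Rightarrow> ('b \<Rightarrow> 'b \<Rightarrow> real) \<Rightarrow> 'b set \<Rightarrow> bool" where
  "sigma_lower_porous Y d P \<longleftrightarrow> (\<exists>A :: nat \<Rightarrow> 'b set. P = (\<Union>n. A n) \<and> (\<forall>n. lower_porous Y d (A n)))"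

end

theory Submission
  imports Defs
begin

lemma modulus_le:
  assumes "\<And>x y. dist x y \<le> s \<Longrightarrow> dist (h x) (h y) \<le> K"
  shows "modulus h s \<le> ereal K"
  unfolding modulus_def using assms by (auto intro!: SUP_least)

lemma modulus_ge:
  assumes "dist x y \<le> s"
  shows "ereal (dist (h x) (h y)) \<le> modulus h s"
  unfolding modulus_def using assms by (auto intro!: SUP_upper2[of "(x,y)"])

lemma C_omega_dist:
  assumes "f \<in> C_omega \<omega>" "dist x y \<le> s"
  shows "dist (f x) (f y) \<le> \<omega> s"
proof -
  have "s \<ge> 0" using assms(2) zero_le_dist[of x y] by linarith
  then have "modulus f s \<le> ereal (\<omega> s)" using assms(1) by (auto simp: C_omega_def)
  moreover have "ereal (dist (f x) (f y)) \<le> modulus f s" by (rule modulus_ge[OF assms(2)])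
  ultimately have "ereal (dist (f x) (f y)) \<le> ereal (\<omega> s)" by (rule order_trans[rotated])
  then show ?thesis by simp
qed

lemma d_sup_le:
  assumes "\<And>x. dist (f x) (g x) \<le> K"
  shows "d_sup f g \<le> K"
  unfolding d_sup_def using assms by (auto intro!: cSUP_least)

lemma Cb_bdd:
  assumes "f \<in> C_omega_b \<omega>" "g \<in> C_omega_b \<omega>"
  shows "bdd_above (range (\<lambda>x. dist (f x) (g x)))"
proof -
  obtain B1 where B1: "\<forall>x y. dist (f x) (f y) \<le> B1" using assms(1) by (auto simp: C_omega_b_def)
  obtain B2 where B2: "\<forall>x y. dist (g x) (g y) \<le> B2" using assms(2) by (auto simp: C_omega_b_def)
  fix x0
  have "dist (f x) (g x) \<le> B1 + dist (f x0) (g x0) + B2" for x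
  proof -
    have "dist (f x) (g x) \<le> dist (f x) (f x0) + dist (f x0) (g x0) + dist (g x0) (g x)"
      by (metis add_mono dist_triangle order_trans order_refl)
    then show ?thesis using B1 B2 by (smt (verit))
  qed
  then show ?thesis by (auto intro!: bdd_aboveI)
qed

lemma d_sup_ge:
  assumes "f \<in> C_omega_b \<omega>" "g \<in> C_omega_b \<omega>"
  shows "dist (f x) (g x) \<le> d_sup f g"
  unfolding d_sup_def using Cb_bdd[OF assms] by (auto intro!: cSUP_upper)

lemma porous_step:
  fixes G :: "'a::metric_space \<Rightarrow> 'a \<Rightarrow> real \<Rightarrow> 'a"
  assumes G: "coherent_geodesics G"
    and hyp: "\<forall>x y z. \<forall>t\<in>{0..1}. dist (geo_comb G t x y) (geo_comb G t x z) \<le> t * dist y z"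
    and om0: "\<forall>s\<ge>0. \<omega> s \<ge> 0"
    and m: "m > 0" "\<forall>s\<ge>r. \<omega> s \<ge> m" "r > 0"
  shows "lower_porous (C_omega_b \<omega> :: ('a \<Rightarrow> 'a) set) d_sup {f \<in> C_omega_b \<omega>. \<exists>s\<ge>r. \<not> modulus f s < ereal (\<omega> s)}" (is "lower_porous ?Y _ ?P")
  unfolding lower_porous_def
proof (intro ballI)
  fix f :: "'a \<Rightarrow> 'a"
  assume fY: "f \<in> C_omega_b \<omega>"
  obtain B where B: "\<forall>x y. dist (f x) (f y) \<le> B" using fY by (auto simp: C_omega_b_def)
  have B0: "B \<ge> 0" using B dist_self[of "f undefined"] by metis
  define c where "c = f undefined"
  define R where "R = 1 + m + B"
  have R: "R > 0" "R > m" "R \<ge> 1" "R \<ge> B" using B0 m unfolding R_def by auto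
  define \<alpha> where "\<alpha> = m / (8 * R)"
  have \<alpha>: "\<alpha> > 0" "\<alpha> \<le> 1/8" using m R unfolding \<alpha>_def by (auto simp: field_simps)
  show "lower_porous_at ?Y d_sup ?P f"
  proof -
  have main: "\<forall>\<epsilon>. 0 < \<epsilon> \<and> \<epsilon> \<le> 1 \<longrightarrow>
     (\<exists>y\<in>C_omega_b \<omega>. {z \<in> C_omega_b \<omega>. d_sup y z < \<alpha> * \<epsilon>} \<subseteq> {z \<in> C_omega_b \<omega>. d_sup f z < \<epsilon>} -
       {f \<in> C_omega_b \<omega>. \<exists>s\<ge>r. \<not> modulus f s < ereal (\<omega> s)})"
  proof (intro allI impI)
    fix \<epsilon> :: real assume \<epsilon>: "0 < \<epsilon> \<and> \<epsilon> \<le> 1"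
    define t where "t = \<epsilon> / (2 * R)"
    have t: "t > 0" "t \<le> 1/2" using \<epsilon> R unfolding t_def by (auto simp: field_simps)
    define \<tau> where "\<tau> = 1 - t"
    have \<tau>: "\<tau> \<in> {0..1}" using t unfolding \<tau>_def by auto
    define g where "g = (\<lambda>x. geo_comb G \<tau> c (f x))"
    have ga: "dist (g x) (g y) \<le> \<tau> * dist (f x) (f y)" for x y
      using hyp \<tau> unfolding g_def by blast
    have gb: "dist (f x) (g x) \<le> \<epsilon> / 2" for x
    proof -
      let ?d = "dist c (f x)"
      have iso: "\<forall>s\<in>{0..?d}. \<forall>u\<in>{0..?d}. dist (G c (f x) s) (G c (f x) u) = \<bar>s - u\<bar>"
        and e: "G c (f x) ?d = f x" using G unfolding coherent_geodesics_def by blast+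
      have "\<tau> * ?d \<in> {0..?d}" using \<tau> by (auto simp: mult_left_le_one_le)
      then have "dist (G c (f x) ?d) (G c (f x) (\<tau> * ?d)) = \<bar>?d - \<tau> * ?d\<bar>"
        using iso by auto
      also have "\<dots> = t * ?d" using t unfolding \<tau>_def by (auto simp: algebra_simps)
      also have "\<dots> \<le> t * B" using B t unfolding c_def by (auto intro!: mult_left_mono)
      also have "\<dots> \<le> t * R" using R t by (auto intro!: mult_left_mono)
      also have "\<dots> = \<epsilon> / 2" using R unfolding t_def by auto
      finally show ?thesis using e unfolding g_def geo_comb_def by simp
    qed
    have gY: "g \<in> C_omega_b \<omega>"
    proof -
      have "modulus g s \<le> ereal (\<omega> s)" if "s \<ge> 0" for s
      proof (rule modulus_le)
        fix x y :: 'a assume "dist x y \<le> s"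
        then have "dist (f x) (f y) \<le> \<omega> s" using fY C_omega_dist by (auto simp: C_omega_b_def)
        then have "\<tau> * dist (f x) (f y) \<le> 1 * \<omega> s"
          using \<tau> om0 that by (intro mult_mono) auto
        then show "dist (g x) (g y) \<le> \<omega> s" using ga[of x y] by simp
      qed
      moreover have "dist (g x) (g y) \<le> B" for x y
      proof -
        have "\<tau> * dist (f x) (f y) \<le> 1 * B" using \<tau> B by (intro mult_mono) auto
        then show ?thesis using ga[of x y] by simp
      qed
      ultimately show ?thesis by (auto simp: C_omega_b_def C_omega_def)
    qed
    show "\<exists>y\<in>C_omega_b \<omega>. {z \<in> C_omega_b \<omega>. d_sup y z < \<alpha> * \<epsilon>} \<subseteq> {z \<in> C_omega_b \<omega>. d_sup f z < \<epsilon>} -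
       {f \<in> C_omega_b \<omega>. \<exists>s\<ge>r. \<not> modulus f s < ereal (\<omega> s)}"
    proof (intro bexI[OF _ gY] subsetI)
      fix k assume "k \<in> {z \<in> C_omega_b \<omega>. d_sup g z < \<alpha> * \<epsilon>}"
      then have kY: "k \<in> C_omega_b \<omega>" and \<delta>: "d_sup g k < \<alpha> * \<epsilon>" by auto
      have gk: "dist (g x) (k x) \<le> d_sup g k" for x by (rule d_sup_ge[OF gY kY])
      have fg: "dist (f x) (g x) \<le> d_sup f g" for x by (rule d_sup_ge[OF fY gY])
      have "d_sup f g \<le> \<epsilon>/2" using gb by (rule d_sup_le)
      have "d_sup f k \<le> d_sup f g + d_sup g k"
      proof (rule d_sup_le)
        fix x show "dist (f x) (k x) \<le> d_sup f g + d_sup g k"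
          using dist_triangle[of "f x" "k x" "g x"] fg[of x] gk[of x] by linarith
      qed
      moreover have "\<alpha> * \<epsilon> \<le> 1/8 * \<epsilon>" using \<alpha> \<epsilon> by (intro mult_right_mono) auto
      ultimately have fk: "d_sup f k < \<epsilon>" using \<open>d_sup f g \<le> \<epsilon>/2\<close> \<delta> \<epsilon>
        by linarith
      have "modulus k s < ereal (\<omega> s)" if "s \<ge> r" for s
      proof -
        have "modulus k s \<le> ereal (\<tau> * \<omega> s + 2 * d_sup g k)"
        proof (rule modulus_le)
          fix x y :: 'a assume "dist x y \<le> s"
          then have "dist (f x) (f y) \<le> \<omega> s" using fY C_omega_dist by (auto simp: C_omega_b_def)
          then have "\<tau> * dist (f x) (f y) \<le> \<tau> * \<omega> s"
            using \<tau> by (intro mult_left_mono) auto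
          moreover have "dist (k x) (k y) \<le> dist (g x) (k x) + dist (g x) (g y) + dist (g y) (k y)"
            using dist_triangle[of "k x" "k y" "g x"] dist_triangle[of "g x" "k y" "g y"]
              dist_commute[of "k x" "g x"] by linarith
          ultimately show "dist (k x) (k y) \<le> \<tau> * \<omega> s + 2 * d_sup g k"
            using gk[of x] gk[of y] ga[of x y] by linarith
        qed
        also have "\<tau> * \<omega> s + 2 * d_sup g k < \<omega> s"
        proof -
          have "t * m \<le> t * \<omega> s" using m that t by (auto intro!: mult_left_mono)
          moreover have "t * m = 4 * (\<alpha> * \<epsilon>)" using R unfolding t_def \<alpha>_def by (auto simp: field_simps)
          moreover have "\<alpha> * \<epsilon> > 0" using \<alpha> \<epsilon> by simp
          ultimately show ?thesis using \<delta> unfolding \<tau>_def by (auto simp: algebra_simps)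
        qed
        then have "ereal (\<tau> * \<omega> s + 2 * d_sup g k) < ereal (\<omega> s)" by simp
        finally show ?thesis .
      qed
      then show "k \<in> {z \<in> C_omega_b \<omega>. d_sup f z < \<epsilon>} -
       {f \<in> C_omega_b \<omega>. \<exists>s\<ge>r. \<not> modulus f s < ereal (\<omega> s)}"
        using kY fk by auto
    qed
  qed
  show ?thesis
    unfolding lower_porous_at_def
    apply (rule exI[of _ "1::real"])
    apply (rule conjI, simp)
    apply (rule exI[of _ \<alpha>])
    using main \<alpha>(1) by blast
  qed
qed

lemma omega_pos:
  fixes \<omega> :: "real \<Rightarrow> real"
  assumes "\<forall>s\<ge>0. \<omega> s \<ge> 0"
    and "\<forall>s\<ge>0. \<forall>t\<ge>0. \<omega> (s + t) \<le> \<omega> s + \<omega> t"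
    and "\<exists>s\<ge>0. \<omega> s \<noteq> 0"
    and "mono_on {0..} \<omega>"
    and "a > 0"
    and "\<omega> 0 = 0"
  shows "\<omega> a > 0"
proof (rule ccontr)
  assume "\<not> \<omega> a > 0"
  moreover have "\<omega> a \<ge> 0" using assms(1,5) by simp
  ultimately have a0: "\<omega> a = 0" by linarith
  have k: "\<omega> (real k * a) = 0" for k :: nat
  proof (induction k)
    case 0 then show ?case using assms(6) by simp
  next
    case (Suc k)
    have "\<omega> (real k * a + a) \<le> \<omega> (real k * a) + \<omega> a"
      using assms(2)[rule_format, of "real k * a" a] assms(5) by simp
    moreover have "\<omega> (real (Suc k) * a) = \<omega> (real k * a + a)" by (simp add: algebra_simps)
    moreover have "\<omega> (real (Suc k) * a) \<ge> 0" using assms(1,5) by simp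
    ultimately show ?case using Suc a0 by linarith
  qed
  obtain s where s: "s \<ge> 0" "\<omega> s \<noteq> 0" using assms(3) by blast
  obtain k :: nat where "s / a \<le> real k" using real_arch_simple by blast
  then have "s \<le> real k * a" using assms(5) by (simp add: field_simps)
  then have "\<omega> s \<le> \<omega> (real k * a)" using mono_onD[OF assms(4), of s "real k * a"] s assms(5)
    by simp
  then show False using k[of k] s assms(1) by force
qed

theorem theorem4p1:
  fixes \<omega> :: "real \<Rightarrow> real"
  assumes "hyperbolic_space TYPE('a::complete_space)"
    and "\<not> bounded (UNIV :: 'a set)"
    and "continuous_on {0..} \<omega>"
    and "\<forall>s\<ge>0. \<omega> s \<ge> 0"
    and "\<forall>s\<ge>0. \<forall>t\<ge>0. \<omega> (s + t) \<le> \<omega> s + \<omega> t"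
    and "\<exists>s\<ge>0. \<omega> s \<noteq> 0"
    and "mono_on {0..} \<omega>"
    and "\<omega> 0 = 0"
  shows "\<exists>M \<subseteq> (C_omega_b \<omega> :: ('a \<Rightarrow> 'a) set).
           sigma_lower_porous (C_omega_b \<omega>) d_sup M \<and>
           (\<forall>f \<in> C_omega_b \<omega> - M. \<forall>s>0. modulus f s < ereal (\<omega> s))"
proof -
  obtain G :: "'a \<Rightarrow> 'a \<Rightarrow> real \<Rightarrow> 'a" where G: "coherent_geodesics G"
    and hyp: "\<forall>x y z. \<forall>t\<in>{0..1}. dist (geo_comb G t x y) (geo_comb G t x z) \<le> t * dist y z"
    using assms(1) unfolding hyperbolic_space_def by blast
  define A where "A = (\<lambda>n::nat. {f \<in> (C_omega_b \<omega> :: ('a \<Rightarrow> 'a) set).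
      \<exists>s\<ge>1 / real (Suc n). \<not> modulus f s < ereal (\<omega> s)})"
  have por: "lower_porous (C_omega_b \<omega>) d_sup (A n)" for n
  proof -
    let ?r = "1 / real (Suc n)"
    have r: "?r > 0" by simp
    have mpos: "\<omega> ?r > 0" using omega_pos[OF assms(4,5,6,7) r assms(8)] .
    have "\<forall>s\<ge>?r. \<omega> s \<ge> \<omega> ?r"
    proof (intro allI impI)
      fix s assume "s \<ge> ?r"
      then show "\<omega> s \<ge> \<omega> ?r" using mono_onD[OF assms(7), of ?r s] r by simp
    qed
    then show ?thesis unfolding A_def
      using porous_step[OF G hyp assms(4) mpos _ r] by blast
  qed
  show ?thesis
  proof (intro exI[of _ "\<Union>n. A n"] conjI)
    show "(\<Union>n. A n) \<subseteq> C_omega_b \<omega>" unfolding A_def by auto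
    show "sigma_lower_porous (C_omega_b \<omega>) d_sup (\<Union>n. A n)"
      unfolding sigma_lower_porous_def using por by blast
    show "\<forall>f\<in>C_omega_b \<omega> - (\<Union>n. A n). \<forall>s>0. modulus f s < ereal (\<omega> s)"
    proof (intro ballI allI impI)
      fix f s assume f: "f \<in> C_omega_b \<omega> - (\<Union>n. A n)" and s: "(s::real) > 0"
      obtain n :: nat where n: "1 / s < real n" using reals_Archimedean2 by blast
      then have "1 / s < real (Suc n)" by simp
      then have "1 / real (Suc n) \<le> s" using s by (simp add: field_simps)
      then show "modulus f s < ereal (\<omega> s)" using f unfolding A_def by auto
    qed
  qed
qed

end
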